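(* Let $\mathcal{S}$ be a relational structure admitting an injective unary FA-presentation $(a^*,\phi)$, and let $R$ be a binary relation in the signature of $\mathcal{S}$. Let $Q$ be the equivalence relation generated by $R$. Then $\Lambda(Q,\phi)=\{(u,v)\in a^*\times a^*:(u\phi,v\phi)\in Q\}$ is regular. Hence $\mathcal{S}$ augmented by $Q$ is also unary FA-presentable.
   Context: For words $w_1,\dots,w_r$ over a finite alphabet $A$, $\mathrm{conv}(w_1,\dots,w_r)$ is the word over $(A\cup\{\$\})^r$ (with $\$\notin A$) whose $j$-th letter is the tuple of $j$-th letters of the $w_i$, shorter words being padded at the end with $\$$. A relation $X\subseteq (A^* )^r$ is regular if $\{\mathrm{conv}(w_1,\dots,w_r):(w_1,\dots,w_r)\in X\}$ is a regular language. An FA-presentation of a relational structure $\mathcal{S}=(S,R_1,\dots,R_n)$ is a pair $(L,\phi)$ with $L$ a regular language over a finite alphabet and $\phi:L\to S$ surjective such that for every relation $R\in\{=,R_1,\dots,R_n\}$ of arity $r$ the relation $\Lambda(R,\phi)=\{(w_1,\dots,w_r)\in L^r : R(w_1\phi,\dots,w_r\phi)\}$ is regular. It is unary if $L$ is over a one-letter alphabet $\{a\}$; a structure is unary FA-presentable if it admits one. An injective unary FA-presentation $(a^*,\phi)$ is one with $L=a^*$ and $\phi$ injective. *)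

theory Defs
  imports Main
begin

text \<open>A language is regular iff it is
accepted by a deterministic finite automaton (finitely many states, encoded as
naturals; the transition function is total, a dead state handles letters outside
the intended alphabet).\<close>

definition regular :: "'a list set \<Rightarrow> bool" where
  "regular L \<longleftrightarrow>
     (\<exists>(Q::nat set) q0 (\<delta>::nat \<Rightarrow> 'a \<Rightarrow> nat) F.
        finite Q \<and> q0 \<in> Q \<and> (\<forall>q\<in>Q. \<forall>x. \<delta> q x \<in> Q) \<and> F \<subseteq> Q \<and>
        L = {w. foldl \<delta> q0 w \<in> F})"

text \<open>Convolution of words; the padding symbol \$ is None. The j-th letter is the
tuple (list) of j-th letters.\<close>

definition conv :: "'a list list \<Rightarrow> 'a option list list" where
  "conv ws = map (\<lambda>j. map (\<lambda>w. if j < length w then Some (w ! j) else None) ws)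
                 [0..<foldr max (map length ws) 0]"

definition regular_rel :: "'a list list set \<Rightarrow> bool" where
  "regular_rel X \<longleftrightarrow> regular (conv ` X)"

definition relational_structure :: "'s set \<Rightarrow> (nat \<times> 's list set) list \<Rightarrow> bool" where
  "relational_structure S rels \<longleftrightarrow>
     (\<forall>(r, R) \<in> set rels. \<forall>xs \<in> R. length xs = r \<and> set xs \<subseteq> S)"

definition Lambda :: "'b list set \<Rightarrow> ('b list \<Rightarrow> 's) \<Rightarrow> nat \<Rightarrow> 's list set \<Rightarrow> 'b list list set" where
  "Lambda L \<phi> r R = {ws. length ws = r \<and> set ws \<subseteq> L \<and> map \<phi> ws \<in> R}"

definition eq_rel :: "'s set \<Rightarrow> 's list set" where
  "eq_rel S = {[x, x] | x. x \<in> S}"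

definition FA_presentation ::
  "'b list set \<Rightarrow> ('b list \<Rightarrow> 's) \<Rightarrow> 's set \<Rightarrow> (nat \<times> 's list set) list \<Rightarrow> bool" where
  "FA_presentation L \<phi> S rels \<longleftrightarrow>
     (\<exists>A. finite A \<and> L \<subseteq> lists A) \<and> regular L \<and> \<phi> ` L = S \<and>
     regular_rel (Lambda L \<phi> 2 (eq_rel S)) \<and>
     (\<forall>(r, R) \<in> set rels. regular_rel (Lambda L \<phi> r R))"

text \<open>Unary: the alphabet is the one-letter alphabet {a}, modelled by type unit.\<close>

definition unary_FA_presentable :: "'s set \<Rightarrow> (nat \<times> 's list set) list \<Rightarrow> bool" where
  "unary_FA_presentable S rels \<longleftrightarrow> (\<exists>(L::unit list set) \<phi>. FA_presentation L \<phi> S rels)"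

end

theory Submission imports Defs "HOL-Library.FuncSet" begin

lemma regular_dfa_any:
  fixes Q :: "'q set" and q0 :: 'q and \<delta> :: "'q \<Rightarrow> 'a \<Rightarrow> 'q"
  assumes "finite Q" "q0 \<in> Q" "\<forall>q\<in>Q. \<forall>x. \<delta> q x \<in> Q" "L = {w. foldl \<delta> q0 w \<in> F}"
  shows "regular L"
proof -
  obtain f :: "'q \<Rightarrow> nat" and n where f: "f ` Q = {i. i < n}" "inj_on f Q"
    using finite_imp_inj_to_nat_seg[OF assms(1)] by blast
  define g where "g = inv_into Q f"
  define \<delta>' where "\<delta>' = (\<lambda>q x. f (\<delta> (g q) x))"
  have gf: "g (f q) = q" if "q \<in> Q" for q using f(2) that by (simp add: g_def)
  have fold: "foldl \<delta>' (f q) w = f (foldl \<delta> q w)" if "q \<in> Q" for q w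
    using that
  proof (induction w arbitrary: q)
    case Nil then show ?case by simp
  next
    case (Cons x w)
    have "foldl \<delta>' (f q) (x # w) = foldl \<delta>' (f (\<delta> q x)) w"
      using gf[OF Cons.prems] by (simp add: \<delta>'_def)
    also have "\<dots> = f (foldl \<delta> (\<delta> q x) w)" using Cons.IH assms(3) Cons.prems by blast
    finally show ?case by simp
  qed
  have inQ: "foldl \<delta> q0 w \<in> Q" for w
  proof (induction w rule: rev_induct)
    case Nil then show ?case using assms(2) by simp
  next
    case (snoc x w) then show ?case using assms(3) by simp
  qed
  have "L = {w. foldl \<delta>' (f q0) w \<in> f ` (F \<inter> Q)}"
  proof -
    have "foldl \<delta> q0 w \<in> F \<longleftrightarrow> f (foldl \<delta> q0 w) \<in> f ` (F \<inter> Q)" for w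
      using inQ[of w] f(2) by (auto simp: inj_on_image_mem_iff)
    then show ?thesis using assms(4) fold[OF assms(2)] by simp
  qed
  moreover have "finite (f ` Q)" using assms(1) by simp
  moreover have "\<forall>q\<in>f ` Q. \<forall>x. \<delta>' q x \<in> f ` Q"
    using assms(3) gf by (auto simp: \<delta>'_def)
  moreover have "f q0 \<in> f ` Q" "f ` (F \<inter> Q) \<subseteq> f ` Q" using assms(2) by auto
  ultimately show ?thesis unfolding regular_def by blast
qed
lemma foldl_replicate_funpow: "foldl \<delta> q (replicate k x) = ((\<lambda>q. \<delta> q x) ^^ k) q"
  by (induction k arbitrary: q) (simp_all add: funpow_Suc_right del: funpow.simps)
lemma funpow_in: "q \<in> Q \<Longrightarrow> \<forall>q\<in>Q. g q \<in> Q \<Longrightarrow> (g ^^ n) q \<in> Q"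
  by (induction n) auto
lemma event_periodic:
  assumes "finite Q" "\<forall>q\<in>Q. g q \<in> Q"
  shows "\<exists>K p. 0 < p \<and> (\<forall>q\<in>Q. \<forall>n\<ge>K. \<forall>k. (g ^^ (n + k * p)) q = (g ^^ n) q)"
proof -
  define h where "h = (\<lambda>n. restrict (g ^^ n) Q)"
  have "h n \<in> Q \<rightarrow>\<^sub>E Q" for n
    unfolding h_def using funpow_in[OF _ assms(2)] by (simp add: restrict_PiE_iff)
  then have "range h \<subseteq> Q \<rightarrow>\<^sub>E Q" by blast
  moreover have "finite (Q \<rightarrow>\<^sub>E Q)" using finite_PiE[OF assms(1) assms(1)] .
  ultimately have "finite (range h)" by (rule finite_subset)
  then have "\<not> inj h" using finite_imageD[of h UNIV] by auto
  then obtain i j where ij0: "i \<noteq> j" "h i = h j" unfolding inj_def by blast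
  obtain i j where ij: "i < j" "h i = h j"
  proof (cases "i < j")
    case True then show ?thesis using that ij0 by blast
  next
    case False then have "j < i" using ij0(1) by simp
    then show ?thesis using that ij0(2) by metis
  qed
  have eq: "(g ^^ i) q = (g ^^ j) q" if "q \<in> Q" for q
  proof -
    have "h i q = h j q" using ij(2) by simp
    then show ?thesis using that unfolding h_def by simp
  qed
  have step: "(g ^^ (n + (j - i))) q = (g ^^ n) q" if "q \<in> Q" "n \<ge> i" for q n
  proof -
    have e1: "n + (j - i) = (n - i) + j" "n = (n - i) + i" using that ij(1) by auto
    have "(g ^^ (n + (j - i))) q = (g ^^ ((n - i) + j)) q" using e1(1) by simp
    also have "\<dots> = (g ^^ (n - i)) ((g ^^ j) q)" by (simp only: funpow_add o_apply)
    also have "\<dots> = (g ^^ (n - i)) ((g ^^ i) q)" using eq that by simp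
    also have "\<dots> = (g ^^ ((n - i) + i)) q" by (simp only: funpow_add o_apply)
    also have "\<dots> = (g ^^ n) q" using e1(2) by simp
    finally show ?thesis .
  qed
  have main: "(g ^^ (n + k * (j - i))) q = (g ^^ n) q" if "q \<in> Q" "n \<ge> i" for q n k
  proof (induction k)
    case 0 then show ?case by simp
  next
    case (Suc k)
    have e: "n + Suc k * (j - i) = (n + k * (j - i)) + (j - i)" by simp
    have "(g ^^ (n + Suc k * (j - i))) q = (g ^^ ((n + k * (j - i)) + (j - i))) q"
      by (simp only: e)
    also have "\<dots> = (g ^^ (n + k * (j - i))) q" using step that by simp
    finally show ?case using Suc by simp
  qed
  show ?thesis
    apply (rule exI[of _ i], rule exI[of _ "j - i"])
    using ij(1) main by simp
qed

definition cc :: "unit option list" where "cc = [Some (), Some ()]"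
definition cr :: "unit option list" where "cr = [None, Some ()]"
definition cl :: "unit option list" where "cl = [Some (), None]"

definition cw :: "nat \<Rightarrow> nat \<Rightarrow> unit option list list" where
  "cw m n = replicate (min m n) cc @ replicate (n - m) cr @ replicate (m - n) cl"

lemma letters_distinct: "cc \<noteq> cr" "cc \<noteq> cl" "cr \<noteq> cl" "cr \<noteq> cc" "cl \<noteq> cc" "cl \<noteq> cr"
  by (auto simp: cc_def cr_def cl_def)

lemma conv_rep: "conv [replicate m (), replicate n ()] = cw m n"
proof (rule nth_equalityI)
  show "length (conv [replicate m (), replicate n ()]) = length (cw m n)"
    by (simp add: conv_def cw_def)
  fix j assume "j < length (conv [replicate m (), replicate n ()])"
  then have j: "j < max m n" by (simp add: conv_def)
  have lhs: "conv [replicate m (), replicate n ()] ! j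
     = [if j < m then Some () else None, if j < n then Some () else None]"
    using j by (simp add: conv_def)
  show "conv [replicate m (), replicate n ()] ! j = cw m n ! j"
  proof (cases "m \<le> n")
    case True
    then show ?thesis using j unfolding lhs cw_def
      by (auto simp: nth_append cc_def cr_def cl_def)
  next
    case False
    then show ?thesis using j unfolding lhs cw_def
      by (auto simp: nth_append cc_def cr_def cl_def)
  qed
qed

lemma count_list_replicate': "count_list (replicate k x) y = (if x = y then k else 0)"
  by (induction k) auto

lemma cw_inj: "cw m n = cw m' n' \<Longrightarrow> m = m' \<and> n = n'"
proof -
  assume h: "cw m n = cw m' n'"
  have "count_list (cw m n) cc = min m n" "count_list (cw m n) cr = n - m"
       "count_list (cw m n) cl = m - n" for m n
    by (simp_all add: cw_def count_list_replicate' letters_distinct)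
  from this[of m n] this[of m' n'] h have "min m n = min m' n'" "n - m = n' - m'" "m - n = m' - n'"
    by metis+
  then show ?thesis by (cases "m \<le> n"; cases "m' \<le> n'") (auto simp: min_def)
qed

lemma unit_list: "(u::unit list) = replicate (length u) ()"
  by (induction u) auto

lemma Lambda_conv:
  "conv ` Lambda UNIV \<phi> 2 Rel = {cw m n | m n. [\<phi> (replicate m ()), \<phi> (replicate n ())] \<in> Rel}"
proof safe
  fix ws assume "ws \<in> Lambda UNIV \<phi> 2 Rel"
  then have ws: "length ws = 2" "map \<phi> ws \<in> Rel" by (auto simp: Lambda_def)
  then obtain u v where uv: "ws = [u, v]"
    by (auto simp: numeral_2_eq_2 length_Suc_conv)
  have "conv ws = cw (length u) (length v)"
    using conv_rep[of "length u" "length v"] unit_list[of u, symmetric] unit_list[of v, symmetric] uv by simp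
  moreover have "[\<phi> (replicate (length u) ()), \<phi> (replicate (length v) ())] \<in> Rel"
    using ws(2) uv unit_list[of u, symmetric] unit_list[of v, symmetric] by simp
  ultimately show "\<exists>m n. conv ws = cw m n \<and> [\<phi> (replicate m ()), \<phi> (replicate n ())] \<in> Rel"
    by blast
next
  fix m n assume "[\<phi> (replicate m ()), \<phi> (replicate n ())] \<in> Rel"
  then have "[replicate m (), replicate n ()] \<in> Lambda UNIV \<phi> 2 Rel" by (simp add: Lambda_def)
  then show "cw m n \<in> conv ` Lambda UNIV \<phi> 2 Rel" using conv_rep by (metis image_eqI)
qed

definition periodic :: "nat \<Rightarrow> nat \<Rightarrow> (nat \<Rightarrow> nat \<Rightarrow> bool) \<Rightarrow> bool" where
  "periodic K p X \<longleftrightarrow> 0 < p \<and>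
     (\<forall>m n. K \<le> m \<longrightarrow> K \<le> n \<longrightarrow> X (m + p) (n + p) = X m n) \<and>
     (\<forall>m n. m + K \<le> n \<longrightarrow> X m (n + p) = X m n) \<and>
     (\<forall>m n. n + K \<le> m \<longrightarrow> X (m + p) n = X m n)"

lemma foldl_cw:
  "foldl \<delta> q (cw m n) = ((\<lambda>q. \<delta> q cl) ^^ (m - n)) (((\<lambda>q. \<delta> q cr) ^^ (n - m)) (((\<lambda>q. \<delta> q cc) ^^ min m n) q))"
  by (simp add: cw_def foldl_replicate_funpow)

lemma reg_to_per:
  assumes "regular {cw m n | m n. X m n}"
  shows "\<exists>K p. periodic K p X"
proof -
  obtain Q :: "nat set" and q0 \<delta> F where A: "finite Q" "q0 \<in> Q" "\<forall>q\<in>Q. \<forall>x. \<delta> q x \<in> Q"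
    "{cw m n | m n. X m n} = {w. foldl \<delta> q0 w \<in> F}"
    using assms unfolding regular_def by (elim exE conjE) (rule that; assumption)
  have mem: "X m n \<longleftrightarrow> foldl \<delta> q0 (cw m n) \<in> F" for m n
  proof -
    have "X m n \<longleftrightarrow> cw m n \<in> {cw m n | m n. X m n}"
    proof
      assume "cw m n \<in> {cw m n | m n. X m n}"
      then obtain m' n' where "cw m n = cw m' n'" "X m' n'" by blast
      then show "X m n" using cw_inj by metis
    qed blast
    then show ?thesis using A(4) by simp
  qed
  define gc where "gc = (\<lambda>q. \<delta> q cc)"
  define gr where "gr = (\<lambda>q. \<delta> q cr)"
  define gl where "gl = (\<lambda>q. \<delta> q cl)"
  have X: "X m n \<longleftrightarrow> (gl ^^ (m - n)) ((gr ^^ (n - m)) ((gc ^^ min m n) q0)) \<in> F" for m n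
    unfolding mem foldl_cw gc_def gr_def gl_def ..
  have cQ: "\<forall>q\<in>Q. gc q \<in> Q" "\<forall>q\<in>Q. gr q \<in> Q" "\<forall>q\<in>Q. gl q \<in> Q"
    using A(3) by (auto simp: gc_def gr_def gl_def)
  obtain Kc pc where c: "0 < pc" "\<forall>q\<in>Q. \<forall>n\<ge>Kc. \<forall>k. (gc ^^ (n + k * pc)) q = (gc ^^ n) q"
    using event_periodic[OF A(1) cQ(1)] by blast
  obtain Kr pr where r: "0 < pr" "\<forall>q\<in>Q. \<forall>n\<ge>Kr. \<forall>k. (gr ^^ (n + k * pr)) q = (gr ^^ n) q"
    using event_periodic[OF A(1) cQ(2)] by blast
  obtain Kl pl where l: "0 < pl" "\<forall>q\<in>Q. \<forall>n\<ge>Kl. \<forall>k. (gl ^^ (n + k * pl)) q = (gl ^^ n) q"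
    using event_periodic[OF A(1) cQ(3)] by blast
  define K where "K = Kc + Kr + Kl"
  define p where "p = pc * pr * pl"
  have inQ: "(gc ^^ k) q0 \<in> Q" "(gr ^^ k) ((gc ^^ k') q0) \<in> Q" for k k'
    using funpow_in[OF A(2) cQ(1)] funpow_in[OF funpow_in[OF A(2) cQ(1)] cQ(2)] by blast+
  have "periodic K p X"
    unfolding periodic_def
  proof (intro conjI allI impI)
    show "0 < p" using c r l by (simp add: p_def)
  next
    fix m n assume mn: "K \<le> m" "K \<le> n"
    have e: "min (m + p) (n + p) = min m n + (pr * pl) * pc" "n + p - (m + p) = n - m"
      "m + p - (n + p) = m - n" by (simp_all add: p_def min_def mult.commute mult.left_commute)
    have "(gc ^^ (min m n + (pr * pl) * pc)) q0 = (gc ^^ min m n) q0"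
    proof -
      have "Kc \<le> min m n" using mn unfolding K_def by linarith
      then show ?thesis using c(2) A(2) by blast
    qed
    then show "X (m + p) (n + p) = X m n" unfolding X e by simp
  next
    fix m n assume mn: "m + K \<le> n"
    have e: "min m (n + p) = min m n" "n + p - m = (n - m) + (pc * pl) * pr" "m - (n + p) = m - n"
      using mn by (simp_all add: p_def min_def mult.commute mult.left_commute)
    have "(gr ^^ ((n - m) + (pc * pl) * pr)) ((gc ^^ min m n) q0) = (gr ^^ (n - m)) ((gc ^^ min m n) q0)"
    proof -
      have "Kr \<le> n - m" using mn unfolding K_def by linarith
      then show ?thesis using r(2) inQ(1) by blast
    qed
    then show "X m (n + p) = X m n" unfolding X e by simp
  next
    fix m n assume mn: "n + K \<le> m"
    have e: "min (m + p) n = min m n" "m + p - n = (m - n) + (pc * pr) * pl" "n - (m + p) = n - m"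
      using mn by (simp_all add: p_def mult.commute mult.left_commute)
    have "(gl ^^ ((m - n) + (pc * pr) * pl)) ((gr ^^ (n - m)) ((gc ^^ min m n) q0)) = (gl ^^ (m - n)) ((gr ^^ (n - m)) ((gc ^^ min m n) q0))"
    proof -
      have "Kl \<le> m - n" using mn unfolding K_def by linarith
      then show ?thesis using l(2) funpow_in[OF inQ(1) cQ(2)] by blast
    qed
    then show "X (m + p) n = X m n" unfolding X e by simp
  qed
  then show ?thesis by blast
qed


definition nm :: "nat \<Rightarrow> nat \<Rightarrow> nat \<Rightarrow> nat" where
  "nm K p x = (if x < K then x else K + (x - K) mod p)"
definition nxt :: "nat \<Rightarrow> nat \<Rightarrow> nat \<Rightarrow> nat" where
  "nxt K p a = (if Suc a < K + p then Suc a else K)"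

lemma nm_Suc: "0 < p \<Longrightarrow> nm K p (Suc x) = nxt K p (nm K p x)"
proof (cases "x < K")
  case True
  then show ?thesis by (cases "Suc x < K") (auto simp: nm_def nxt_def)
next
  case False
  assume p: "0 < p"
  have "Suc (x - K) mod p = (if Suc ((x - K) mod p) = p then 0 else Suc ((x - K) mod p))"
    by (rule mod_Suc)
  moreover have "(x - K) mod p < p" using p by simp
  ultimately show ?thesis using False by (auto simp: nm_def nxt_def Suc_diff_le)
qed

lemma nm_0: "nm K p 0 = 0" by (simp add: nm_def)

lemma nxt_lt: "0 < p \<Longrightarrow> nxt K p a < K + p" by (simp add: nxt_def)

lemma nm_decomp: "K \<le> x \<Longrightarrow> x = nm K p x + ((x - K) div p) * p \<and> K \<le> nm K p x"
  by (simp add: nm_def)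

lemma per_it1: "periodic K p X \<Longrightarrow> K \<le> m \<Longrightarrow> K \<le> n \<Longrightarrow> X (m + k * p) (n + k * p) = X m n"
proof (induction k)
  case (Suc k)
  have "X (m + Suc k * p) (n + Suc k * p) = X ((m + k * p) + p) ((n + k * p) + p)"
    by (simp add: algebra_simps)
  also have "\<dots> = X (m + k * p) (n + k * p)" using Suc.prems unfolding periodic_def
    by (metis le_add1 le_trans)
  finally show ?case using Suc by simp
qed simp

lemma per_it2: "periodic K p X \<Longrightarrow> m + K \<le> n \<Longrightarrow> X m (n + k * p) = X m n"
proof (induction k)
  case (Suc k)
  have "X m (n + Suc k * p) = X m ((n + k * p) + p)"
    by (simp add: algebra_simps)
  also have "\<dots> = X m (n + k * p)" using Suc.prems unfolding periodic_def
    by (metis le_add1 le_trans)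
  finally show ?case using Suc by simp
qed simp

lemma per_it3: "periodic K p X \<Longrightarrow> n + K \<le> m \<Longrightarrow> X (m + k * p) n = X m n"
proof (induction k)
  case (Suc k)
  have "X (m + Suc k * p) n = X ((m + k * p) + p) n"
    by (simp add: algebra_simps)
  also have "\<dots> = X (m + k * p) n" using Suc.prems unfolding periodic_def
    by (metis le_add1 le_trans)
  finally show ?case using Suc by simp
qed simp

lemma per_key1:
  assumes P: "periodic K p X" and mn: "m \<le> n"
  shows "X m n = X (nm K p m) (nm K p m + nm K p (n - m))"
proof -
  define a where "a = nm K p m"
  define d where "d = n - m"
  have s1: "X m n = X a (a + d)"
  proof (cases "m < K")
    case True then show ?thesis using mn by (simp add: a_def d_def nm_def)
  next
    case False
    then have m: "m = a + ((m - K) div p) * p" "K \<le> a" using nm_decomp[of K m p] by (auto simp: a_def)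
    have n: "n = (a + d) + ((m - K) div p) * p" using m(1) mn by (simp add: d_def)
    show ?thesis using per_it1[OF P m(2), of "a + d" "(m - K) div p"] m n by simp
  qed
  have s2: "X a (a + d) = X a (a + nm K p d)"
  proof (cases "d < K")
    case True then show ?thesis by (simp add: nm_def)
  next
    case False
    then have d: "d = nm K p d + ((d - K) div p) * p" "K \<le> nm K p d" using nm_decomp[of K d p] by auto
    have "X a ((a + nm K p d) + ((d - K) div p) * p) = X a (a + nm K p d)"
      using per_it2[OF P, of a "a + nm K p d"] d(2) by simp
    moreover have "(a + nm K p d) + ((d - K) div p) * p = a + d" using d(1) by simp
    ultimately show ?thesis by simp
  qed
  show ?thesis using s1 s2 by (simp add: a_def d_def)
qed

lemma per_key2:
  assumes P: "periodic K p X" and mn: "n \<le> m"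
  shows "X m n = X (nm K p n + nm K p (m - n)) (nm K p n)"
proof -
  define a where "a = nm K p n"
  define d where "d = m - n"
  have s1: "X m n = X (a + d) a"
  proof (cases "n < K")
    case True then show ?thesis using mn by (simp add: a_def d_def nm_def)
  next
    case False
    then have n: "n = a + ((n - K) div p) * p" "K \<le> a" using nm_decomp[of K n p] by (auto simp: a_def)
    have m: "m = (a + d) + ((n - K) div p) * p" using n(1) mn by (simp add: d_def)
    show ?thesis using per_it1[OF P _ n(2), of "a + d" "(n - K) div p"] m n by simp
  qed
  have s2: "X (a + d) a = X (a + nm K p d) a"
  proof (cases "d < K")
    case True then show ?thesis by (simp add: nm_def)
  next
    case False
    then have d: "d = nm K p d + ((d - K) div p) * p" "K \<le> nm K p d" using nm_decomp[of K d p] by auto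
    have "X ((a + nm K p d) + ((d - K) div p) * p) a = X (a + nm K p d) a"
      using per_it3[OF P, of a "a + nm K p d"] d(2) by simp
    moreover have "(a + nm K p d) + ((d - K) div p) * p = a + d" using d(1) by simp
    ultimately show ?thesis by simp
  qed
  show ?thesis using s1 s2 by (simp add: a_def d_def)
qed

lemma cw_cc: "cw m m @ [cc] = cw (Suc m) (Suc m)"
  by (simp add: cw_def replicate_append_same)
lemma cw_cr: "m \<le> n \<Longrightarrow> cw m n @ [cr] = cw m (Suc n)"
  by (simp add: cw_def replicate_append_same Suc_diff_le)
lemma cw_cl: "n \<le> m \<Longrightarrow> cw m n @ [cl] = cw (Suc m) n"
  by (simp add: cw_def replicate_append_same Suc_diff_le)

lemma per_to_reg:
  assumes P: "periodic K p X"
  shows "regular {cw m n | m n. X m n}"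
proof -
  have p: "0 < p" using P by (simp add: periodic_def)
  define \<delta> :: "nat \<times> nat \<times> nat \<Rightarrow> unit option list \<Rightarrow> nat \<times> nat \<times> nat" where
    "\<delta> = (\<lambda>(ph, a, b) x.
       if ph = 0 \<and> x = cc then (0, nxt K p a, 0)
       else if ph = 0 \<and> x = cr then (1, a, nxt K p 0)
       else if ph = 1 \<and> x = cr then (1, a, nxt K p b)
       else if ph = 0 \<and> x = cl then (2, a, nxt K p 0)
       else if ph = 2 \<and> x = cl then (2, a, nxt K p b)
       else (3, 0, 0))"
  define st where "st = (\<lambda>m n. if m = n then (0::nat, nm K p m, 0::nat)
       else if m < n then (1, nm K p m, nm K p (n - m)) else (2, nm K p n, nm K p (m - n)))"
  define acc where "acc = (\<lambda>(ph, a, b). (ph = (0::nat) \<and> X a a) \<or> (ph = 1 \<and> X a (a + b)) \<or> (ph = 2 \<and> X (a + b) a))"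
  have diag: "foldl \<delta> (0, 0, 0) (cw m m) = (0, nm K p m, 0)" for m
  proof (induction m)
    case 0 then show ?case by (simp add: cw_def nm_0)
  next
    case (Suc m)
    then show ?case unfolding cw_cc[symmetric] using nm_Suc[OF p] by (simp add: \<delta>_def)
  qed
  have right: "foldl \<delta> (0, 0, 0) (cw m (m + d)) = st m (m + d)" for m d
  proof (induction d)
    case 0 then show ?case using diag by (simp add: st_def)
  next
    case (Suc d)
    have "cw m (m + Suc d) = cw m (m + d) @ [cr]" using cw_cr[of m "m + d"] by simp
    then show ?case using Suc nm_Suc[OF p] letters_distinct
      by (cases d) (simp_all add: \<delta>_def st_def nm_0)
  qed
  have left: "foldl \<delta> (0, 0, 0) (cw (n + d) n) = st (n + d) n" for n d
  proof (induction d)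
    case 0 then show ?case using diag by (simp add: st_def)
  next
    case (Suc d)
    have "cw (n + Suc d) n = cw (n + d) n @ [cl]" using cw_cl[of n "n + d"] by simp
    then show ?case using Suc nm_Suc[OF p] letters_distinct
      by (cases d) (simp_all add: \<delta>_def st_def nm_0)
  qed
  have fold_st: "foldl \<delta> (0, 0, 0) (cw m n) = st m n" for m n
  proof (cases "m \<le> n")
    case True
    then obtain d where "n = m + d" using le_Suc_ex by blast
    then show ?thesis using right by simp
  next
    case False
    then obtain d where "m = n + d" using le_Suc_ex[of n m] by auto
    then show ?thesis using left by simp
  qed
  have acc_st: "acc (st m n) \<longleftrightarrow> X m n" for m n
  proof -
    consider "m = n" | "m < n" | "n < m" by linarith
    then show ?thesis
    proof cases
      case 1 then show ?thesis using per_key1[OF P, of m m] by (simp add: st_def acc_def nm_0)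
    next
      case 2 then show ?thesis using per_key1[OF P, of m n] by (simp add: st_def acc_def)
    next
      case 3 then show ?thesis using per_key2[OF P, of n m] by (simp add: st_def acc_def)
    qed
  qed
  have dead: "(\<exists>m n. w = cw m n) \<or> fst (foldl \<delta> (0, 0, 0) w) = 3" for w
  proof (induction w rule: rev_induct)
    case Nil then show ?case by (metis cw_def replicate_0 append_Nil diff_self_eq_0 min.idem)
  next
    case (snoc x w)
    show ?case
    proof (cases "fst (foldl \<delta> (0, 0, 0) w) = 3")
      case True
      then show ?thesis by (cases "foldl \<delta> (0, 0, 0) w") (simp add: \<delta>_def)
    next
      case False
      then obtain m n where w: "w = cw m n" using snoc by blast
      have S: "foldl \<delta> (0, 0, 0) (w @ [x]) = \<delta> (st m n) x" using fold_st w by simp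
      consider "x = cc" | "x = cr" | "x = cl" | "x \<noteq> cc" "x \<noteq> cr" "x \<noteq> cl" by blast
      then show ?thesis
      proof cases
        case 1
        then show ?thesis
        proof (cases "m = n")
          case True then show ?thesis using cw_cc w 1 by blast
        next
          case False then show ?thesis using S 1 letters_distinct by (simp add: \<delta>_def st_def)
        qed
      next
        case 2
        then show ?thesis
        proof (cases "m \<le> n")
          case True then show ?thesis using cw_cr w 2 by blast
        next
          case False then show ?thesis using S 2 letters_distinct by (simp add: \<delta>_def st_def)
        qed
      next
        case 3
        then show ?thesis
        proof (cases "n \<le> m")
          case True then show ?thesis using cw_cl w 3 by blast
        next
          case False then show ?thesis using S 3 letters_distinct by (simp add: \<delta>_def st_def)
        qed
      next
        case 4 then show ?thesis using S by (simp add: \<delta>_def st_def)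
      qed
    qed
  qed
  have lang: "{cw m n | m n. X m n} = {w. foldl \<delta> (0, 0, 0) w \<in> Collect acc}"
  proof (rule set_eqI, rule iffI)
    fix w assume "w \<in> {cw m n | m n. X m n}"
    then obtain m n where "w = cw m n" "X m n" by blast
    then show "w \<in> {w. foldl \<delta> (0, 0, 0) w \<in> Collect acc}" using fold_st acc_st by simp
  next
    fix w assume "w \<in> {w. foldl \<delta> (0, 0, 0) w \<in> Collect acc}"
    then have a: "acc (foldl \<delta> (0, 0, 0) w)" by simp
    have "fst (foldl \<delta> (0, 0, 0) w) \<noteq> 3"
      using a by (cases "foldl \<delta> (0, 0, 0) w") (auto simp: acc_def)
    then obtain m n where w: "w = cw m n" using dead by blast
    then have "X m n" using a fold_st acc_st by simp
    then show "w \<in> {cw m n | m n. X m n}" using w by blast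
  qed
  define Q where "Q = {..(3::nat)} \<times> {..<K + p} \<times> {..<K + p}"
  have fQ: "finite Q" by (simp add: Q_def)
  have q0: "(0, 0, 0) \<in> Q" using p by (simp add: Q_def)
  have cl: "\<forall>q\<in>Q. \<forall>x. \<delta> q x \<in> Q"
    using nxt_lt[OF p] p by (auto simp: Q_def \<delta>_def)
  show ?thesis by (rule regular_dfa_any[OF fQ q0 cl lang])
qed


locale sg =
  fixes F :: "nat \<Rightarrow> nat \<Rightarrow> bool" and p K :: nat
  assumes p_pos: "0 < p"
    and symF: "\<And>u v. F u v = F v u"
    and inv: "\<And>u v. F (u + p) (v + p) = F u v"
    and long: "\<And>u v. u + K \<le> v \<Longrightarrow> F u (v + p) = F u v"
begin

lemma inv_it: "F (u + k * p) (v + k * p) = F u v"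
proof (induction k)
  case (Suc k)
  have "F (u + Suc k * p) (v + Suc k * p) = F ((u + k * p) + p) ((v + k * p) + p)"
    by (simp add: algebra_simps)
  then show ?case using inv Suc by simp
qed simp

lemma long_it: "u + K \<le> v \<Longrightarrow> F u (v + k * p) = F u v"
proof (induction k)
  case (Suc k)
  have "F u (v + Suc k * p) = F u ((v + k * p) + p)" by (simp add: algebra_simps)
  also have "\<dots> = F u (v + k * p)" using long[of u "v + k * p"] Suc.prems by simp
  finally show ?case using Suc by simp
qed simp

lemma long_it': "u + K \<le> v \<Longrightarrow> F (v + k * p) u = F v u"
  using long_it symF by metis

lemma rt_sym: "F\<^sup>*\<^sup>* u v \<Longrightarrow> F\<^sup>*\<^sup>* v u"
proof (induction rule: rtranclp_induct)
  case (step y z)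
  then show ?case using symF by (metis converse_rtranclp_into_rtranclp)
qed simp

lemma up: "F\<^sup>*\<^sup>* u v \<Longrightarrow> F\<^sup>*\<^sup>* (u + k * p) (v + k * p)"
proof (induction rule: rtranclp_induct)
  case (step y z)
  then show ?case using inv_it[of y k z] by (metis rtranclp.rtrancl_into_rtrancl)
qed simp

lemma down:
  assumes "\<forall>z. F\<^sup>*\<^sup>* x z \<longrightarrow> k * p \<le> z" "F\<^sup>*\<^sup>* x y"
  shows "F\<^sup>*\<^sup>* (x - k * p) (y - k * p)"
  using assms(2)
proof (induction rule: rtranclp_induct)
  case (step y z)
  have yz: "k * p \<le> y" "k * p \<le> z" using assms(1) step by (auto intro: rtranclp.rtrancl_into_rtrancl)
  have "F (y - k * p) (z - k * p)" using inv_it[of "y - k * p" k "z - k * p"] yz step(2) by simp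
  then show ?case using step(3) by (metis rtranclp.rtrancl_into_rtrancl)
qed simp

definition comp :: "nat \<Rightarrow> nat set" where "comp u = {v. F\<^sup>*\<^sup>* u v}"

lemma reduce:
  obtains j r where "r < p" "\<And>z. F\<^sup>*\<^sup>* u z \<Longrightarrow> j * p \<le> z \<and> F\<^sup>*\<^sup>* r (z - j * p)"
    "\<And>y. F\<^sup>*\<^sup>* r y \<Longrightarrow> F\<^sup>*\<^sup>* u (y + j * p)"
proof -
  define m where "m = (LEAST w. F\<^sup>*\<^sup>* u w)"
  have um: "F\<^sup>*\<^sup>* u m" unfolding m_def by (rule LeastI[of _ u]) simp
  have mle: "F\<^sup>*\<^sup>* u z \<Longrightarrow> m \<le> z" for z unfolding m_def by (rule Least_le)
  define j where "j = m div p"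
  define r where "r = m mod p"
  have r: "r < p" using p_pos by (simp add: r_def)
  have jm: "j * p \<le> m" by (simp add: j_def)
  have mr: "m - j * p = r" "r + j * p = m" by (simp_all add: j_def r_def minus_div_mult_eq_mod mod_div_mult_eq)
  have allm: "\<forall>z. F\<^sup>*\<^sup>* m z \<longrightarrow> j * p \<le> z"
    using um mle jm by (meson le_trans rtranclp_trans)
  have A: "j * p \<le> z \<and> F\<^sup>*\<^sup>* r (z - j * p)" if "F\<^sup>*\<^sup>* u z" for z
  proof -
    have "F\<^sup>*\<^sup>* m z" using rt_sym[OF um] that by (rule rtranclp_trans)
    then show ?thesis using down[OF allm] allm mr(1) by metis
  qed
  have B: "F\<^sup>*\<^sup>* u (y + j * p)" if "F\<^sup>*\<^sup>* r y" for y
    using up[OF that, of j] mr(2) um by (metis rtranclp_trans)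
  show thesis using r A B by (rule that)
qed

definition W0 :: nat where "W0 = (\<Sum>r<p. if finite (comp r) then Max (comp r) else 0)"

lemma span:
  assumes "finite (comp u)" "F\<^sup>*\<^sup>* u w"
  shows "w \<le> u + W0 \<and> u \<le> w + W0"
proof -
  obtain j r where r: "r < p" "\<And>z. F\<^sup>*\<^sup>* u z \<Longrightarrow> j * p \<le> z \<and> F\<^sup>*\<^sup>* r (z - j * p)"
    "\<And>y. F\<^sup>*\<^sup>* r y \<Longrightarrow> F\<^sup>*\<^sup>* u (y + j * p)" by (rule reduce[of u]) blast
  have "comp r \<subseteq> (\<lambda>z. z - j * p) ` comp u"
  proof
    fix y assume "y \<in> comp r"
    then have "y + j * p \<in> comp u" using r(3) by (simp add: comp_def)
    then show "y \<in> (\<lambda>z. z - j * p) ` comp u" by (metis add_diff_cancel_right' image_eqI)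
  qed
  then have fr: "finite (comp r)" using assms(1) finite_subset by blast
  have "Max (comp r) \<le> W0"
  proof -
    have "(if finite (comp r) then Max (comp r) else 0) \<le> W0"
      unfolding W0_def by (rule member_le_sum) (use r(1) in auto)
    then show ?thesis using fr by simp
  qed
  moreover have "z - j * p \<le> Max (comp r)" if "F\<^sup>*\<^sup>* u z" for z
    using r(2)[OF that] fr by (simp add: comp_def)
  ultimately have le: "z - j * p \<le> W0" "j * p \<le> z" if "F\<^sup>*\<^sup>* u z" for z
    using that r(2) by (meson le_trans)+
  show ?thesis using le[OF assms(2)] le[of u, OF rtranclp.rtrancl_refl] by arith
qed

lemma inf_period_r:
  assumes "infinite (comp r)"
  shows "\<exists>i>0. F\<^sup>*\<^sup>* r (r + i * p)"
proof -
  have "(\<lambda>y. y mod p) ` comp r \<subseteq> {..<p}" using p_pos by auto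
  then have "finite ((\<lambda>y. y mod p) ` comp r)" using finite_subset by blast
  then have "\<not> inj_on (\<lambda>y. y mod p) (comp r)" using finite_imageD assms by blast
  then obtain x y where xy: "x \<in> comp r" "y \<in> comp r" "x \<noteq> y" "x mod p = y mod p"
    unfolding inj_on_def by blast
  have "\<exists>x y. x \<in> comp r \<and> y \<in> comp r \<and> x < y \<and> x mod p = y mod p"
  proof (cases "x < y")
    case True then show ?thesis using xy by blast
  next
    case False then have "y < x" using xy(3) by simp
    then show ?thesis using xy by metis
  qed
  then obtain x y where xy: "F\<^sup>*\<^sup>* r x" "F\<^sup>*\<^sup>* r y" "x < y" "x mod p = y mod p"
    by (auto simp: comp_def)
  have "p dvd y - x" using xy(3,4) mod_eq_dvd_iff_nat[of x y p] by simp
  then obtain i where i: "y - x = p * i" by (rule dvdE)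
  have ipos: "0 < i" using i xy(3) by (cases i) auto
  have y: "y = x + i * p" using i xy(3) by (simp add: algebra_simps)
  have "F\<^sup>*\<^sup>* (r + i * p) y" using up[OF xy(1), of i] y by simp
  then have "F\<^sup>*\<^sup>* r (r + i * p)" using xy(2) rt_sym by (metis rtranclp_trans)
  then show ?thesis using ipos by blast
qed

lemma mult_period: "F\<^sup>*\<^sup>* r (r + i * p) \<Longrightarrow> F\<^sup>*\<^sup>* r (r + k * (i * p))"
proof (induction k)
  case (Suc k)
  have "F\<^sup>*\<^sup>* (r + k * (i * p)) (r + i * p + k * (i * p))"
    using up[OF Suc.prems, of "k * i"] by (simp add: algebra_simps)
  moreover have "r + i * p + k * (i * p) = r + Suc k * (i * p)" by simp
  ultimately show ?case using Suc by (metis rtranclp_trans)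
qed simp

lemma period: "\<exists>c. 0 < c \<and> (\<forall>u. infinite (comp u) \<longrightarrow> F\<^sup>*\<^sup>* u (u + c * p))"
proof -
  define I where "I = {r. r < p \<and> infinite (comp r)}"
  define ifun where "ifun = (\<lambda>r. SOME i. 0 < i \<and> F\<^sup>*\<^sup>* r (r + i * p))"
  have ifun: "0 < ifun r \<and> F\<^sup>*\<^sup>* r (r + ifun r * p)" if "r \<in> I" for r
    unfolding ifun_def by (rule someI_ex) (use inf_period_r that I_def in auto)
  define c where "c = prod ifun I"
  have fI: "finite I" by (simp add: I_def)
  have cpos: "0 < c" unfolding c_def using ifun by (simp add: prod_pos)
  have cr: "F\<^sup>*\<^sup>* r (r + c * p)" if rI: "r \<in> I" for r
  proof -
    obtain k where k: "c = ifun r * k" using dvd_prodI[OF fI rI, of ifun] by (auto simp: c_def)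
    have cp: "r + c * p = r + k * (ifun r * p)" using k by simp
    show ?thesis unfolding cp using mult_period ifun[OF rI] by blast
  qed
  have "F\<^sup>*\<^sup>* u (u + c * p)" if "infinite (comp u)" for u
  proof -
    obtain j r where r: "r < p" "\<And>z. F\<^sup>*\<^sup>* u z \<Longrightarrow> j * p \<le> z \<and> F\<^sup>*\<^sup>* r (z - j * p)"
      "\<And>y. F\<^sup>*\<^sup>* r y \<Longrightarrow> F\<^sup>*\<^sup>* u (y + j * p)" by (rule reduce[of u]) blast
    have "comp u \<subseteq> (\<lambda>y. y + j * p) ` comp r"
    proof
      fix z assume "z \<in> comp u"
      then have "j * p \<le> z \<and> z - j * p \<in> comp r" using r(2) by (simp add: comp_def)
      then show "z \<in> (\<lambda>y. y + j * p) ` comp r" by (metis le_add_diff_inverse2 image_eqI)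
    qed
    then have "infinite (comp r)" using that finite_subset by blast
    then have "r \<in> I" using r(1) by (simp add: I_def)
    then have "F\<^sup>*\<^sup>* r (r + c * p)" by (rule cr)
    then have "F\<^sup>*\<^sup>* (r + j * p) (r + c * p + j * p)" by (rule up)
    moreover have "F\<^sup>*\<^sup>* u (r + j * p)" using r(3)[of r] by simp
    ultimately have um: "F\<^sup>*\<^sup>* u (r + j * p + c * p)" by (simp add: algebra_simps)
    have "F\<^sup>*\<^sup>* (u + c * p) (r + j * p + c * p)"
      using up[OF r(3)[of r], of c] by (simp add: algebra_simps)
    then show ?thesis using um rt_sym by (metis rtranclp_trans)
  qed
  then show ?thesis using cpos by blast
qed

end


context sg begin

definition cP :: nat where "cP = (SOME c. 0 < c \<and> (\<forall>u. infinite (comp u) \<longrightarrow> F\<^sup>*\<^sup>* u (u + c * p)))"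

lemma cP: "0 < cP" "infinite (comp u) \<Longrightarrow> F\<^sup>*\<^sup>* u (u + cP * p)"
  using someI_ex[OF period] unfolding cP_def by blast+

lemma finite_shift:
  assumes u: "W0 + K + cP * p \<le> u" and fin: "finite (comp u)" and w: "F\<^sup>*\<^sup>* (u + cP * p) w"
  shows "cP * p \<le> w \<and> F\<^sup>*\<^sup>* u (w - cP * p)"
  using w
proof (induction rule: rtranclp_induct)
  case base then show ?case by simp
next
  case (step y z)
  have y: "cP * p \<le> y" "F\<^sup>*\<^sup>* u (y - cP * p)" using step.IH by auto
  have sp: "u \<le> (y - cP * p) + W0" using span[OF fin y(2)] by simp
  show ?case
  proof (cases "cP * p \<le> z")
    case True
    have "F (y - cP * p) (z - cP * p)" using inv_it[of "y - cP * p" cP "z - cP * p"] y(1) True step(2) by simp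
    then show ?thesis using True y(2) by (metis rtranclp.rtrancl_into_rtrancl)
  next
    case False
    have le: "z + K \<le> y - cP * p" using False sp u by linarith
    have "F (y - cP * p) z" using long_it'[OF le, of cP] y(1) step(2) by simp
    then have "F\<^sup>*\<^sup>* u z" using y(2) by (metis rtranclp.rtrancl_into_rtrancl)
    then have "u \<le> z + W0" using span[OF fin] by blast
    then show ?thesis using False u by linarith
  qed
qed

lemma FG1:
  assumes "W0 + K + cP * p \<le> u" "W0 + K + cP * p \<le> v"
  shows "F\<^sup>*\<^sup>* (u + cP * p) (v + cP * p) = F\<^sup>*\<^sup>* u v"
proof
  assume "F\<^sup>*\<^sup>* u v" then show "F\<^sup>*\<^sup>* (u + cP * p) (v + cP * p)" by (rule up)
next
  assume h: "F\<^sup>*\<^sup>* (u + cP * p) (v + cP * p)"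
  show "F\<^sup>*\<^sup>* u v"
  proof (cases "finite (comp u)")
    case True then show ?thesis using finite_shift[OF assms(1) True h] by simp
  next
    case False
    then have uu: "F\<^sup>*\<^sup>* u (u + cP * p)" by (rule cP(2))
    show ?thesis
    proof (cases "finite (comp v)")
      case True then show ?thesis using finite_shift[OF assms(2) True rt_sym[OF h]] rt_sym by simp
    next
      case False
      then have vv: "F\<^sup>*\<^sup>* v (v + cP * p)" by (rule cP(2))
      show ?thesis using uu h rt_sym[OF vv] by (metis rtranclp_trans)
    qed
  qed
qed

lemma FG2:
  assumes "W0 + K + cP * p \<le> v" "u + W0 + 1 \<le> v"
  shows "F\<^sup>*\<^sup>* u (v + cP * p) = F\<^sup>*\<^sup>* u v"
proof (cases "finite (comp v)")
  case True
  have "\<not> F\<^sup>*\<^sup>* u v"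
  proof
    assume "F\<^sup>*\<^sup>* u v"
    then have "v \<le> u + W0" using span[OF True rt_sym] by blast
    then show False using assms(2) by simp
  qed
  moreover have "\<not> F\<^sup>*\<^sup>* u (v + cP * p)"
  proof
    assume "F\<^sup>*\<^sup>* u (v + cP * p)"
    then have "cP * p \<le> u \<and> F\<^sup>*\<^sup>* v (u - cP * p)" using finite_shift[OF assms(1) True] rt_sym by blast
    then have "v \<le> u - cP * p + W0" using span[OF True] by blast
    then show False using assms(2) by linarith
  qed
  ultimately show ?thesis by simp
next
  case False
  then have vv: "F\<^sup>*\<^sup>* v (v + cP * p)" by (rule cP(2))
  then show ?thesis using rt_sym[OF vv] by (metis rtranclp_trans)
qed

lemma FA:
  assumes Pr: "\<And>w. K \<le> w \<Longrightarrow> Pr (w + cP * p) = Pr w" and u: "W0 + K + K + cP * p \<le> u"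
  shows "(\<exists>w. F\<^sup>*\<^sup>* (u + cP * p) w \<and> Pr w) = (\<exists>w. F\<^sup>*\<^sup>* u w \<and> Pr w)"
proof (cases "finite (comp u)")
  case True
  have u': "W0 + K + cP * p \<le> u" using u by simp
  show ?thesis
  proof
    assume "\<exists>w. F\<^sup>*\<^sup>* (u + cP * p) w \<and> Pr w"
    then obtain w where w: "F\<^sup>*\<^sup>* (u + cP * p) w" "Pr w" by blast
    then have w2: "cP * p \<le> w" "F\<^sup>*\<^sup>* u (w - cP * p)" using finite_shift[OF u' True] by auto
    then have "u \<le> w - cP * p + W0" using span[OF True] by blast
    then have "K \<le> w - cP * p" using u by linarith
    then have "Pr (w - cP * p)" using Pr[of "w - cP * p"] w(2) w2(1) by simp
    then show "\<exists>w. F\<^sup>*\<^sup>* u w \<and> Pr w" using w2 by blast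
  next
    assume "\<exists>w. F\<^sup>*\<^sup>* u w \<and> Pr w"
    then obtain w where w: "F\<^sup>*\<^sup>* u w" "Pr w" by blast
    then have "u \<le> w + W0" using span[OF True] by blast
    then have "K \<le> w" using u by linarith
    then have "Pr (w + cP * p)" using Pr w(2) by simp
    moreover have "F\<^sup>*\<^sup>* (u + cP * p) (w + cP * p)" using up[OF w(1)] .
    ultimately show "\<exists>w. F\<^sup>*\<^sup>* (u + cP * p) w \<and> Pr w" by blast
  qed
next
  case False
  then have uu: "F\<^sup>*\<^sup>* u (u + cP * p)" by (rule cP(2))
  show ?thesis using uu rt_sym[OF uu] by (meson rtranclp_trans)
qed

end


definition Fk :: "(nat \<Rightarrow> nat \<Rightarrow> bool) \<Rightarrow> nat \<Rightarrow> nat \<Rightarrow> nat \<Rightarrow> bool" where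
  "Fk E K = (\<lambda>a b. E (a + K) (b + K))"

lemma Fk_map: "(Fk E K)\<^sup>*\<^sup>* a b \<Longrightarrow> E\<^sup>*\<^sup>* (a + K) (b + K)"
proof (induction rule: rtranclp_induct)
  case (step y z)
  then show ?case by (metis Fk_def rtranclp.rtrancl_into_rtrancl)
qed simp

lemma E_sym: assumes "\<And>u v. E u v = E v u" and "E\<^sup>*\<^sup>* u v" shows "E\<^sup>*\<^sup>* v u"
  using assms(2)
proof (induction rule: rtranclp_induct)
  case (step y z)
  then show ?case using assms(1) by (metis converse_rtranclp_into_rtranclp)
qed simp

lemma E_sym_iff: assumes "\<And>u v. E u v = E v u" shows "E\<^sup>*\<^sup>* u v = E\<^sup>*\<^sup>* v u"
  using E_sym[of E, OF assms] by blast

lemma decomp: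
  fixes E :: "nat \<Rightarrow> nat \<Rightarrow> bool" and K :: nat
  assumes sym: "\<And>u v. E u v = E v u"
  defines "A \<equiv> (\<lambda>u s. u = s \<or> (K \<le> u \<and> (\<exists>w. (Fk E K)\<^sup>*\<^sup>* (u - K) w \<and> E (w + K) s)))"
  shows "E\<^sup>*\<^sup>* u v \<longleftrightarrow> (K \<le> u \<and> K \<le> v \<and> (Fk E K)\<^sup>*\<^sup>* (u - K) (v - K))
           \<or> (\<exists>s t. s < K \<and> t < K \<and> A u s \<and> A v t \<and> E\<^sup>*\<^sup>* s t)"
proof
  have AE: "E\<^sup>*\<^sup>* x s" if hA: "A x s" for x s
  proof (cases "x = s")
    case False
    then obtain w where w: "K \<le> x" "(Fk E K)\<^sup>*\<^sup>* (x - K) w" "E (w + K) s" using hA by (auto simp: A_def)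
    have "E\<^sup>*\<^sup>* x (w + K)" using Fk_map[OF w(2)] w(1) by simp
    then show ?thesis using w(3) by (metis rtranclp.rtrancl_into_rtrancl)
  qed simp
  assume "(K \<le> u \<and> K \<le> v \<and> (Fk E K)\<^sup>*\<^sup>* (u - K) (v - K))
           \<or> (\<exists>s t. s < K \<and> t < K \<and> A u s \<and> A v t \<and> E\<^sup>*\<^sup>* s t)"
  then show "E\<^sup>*\<^sup>* u v"
  proof
    assume h: "K \<le> u \<and> K \<le> v \<and> (Fk E K)\<^sup>*\<^sup>* (u - K) (v - K)"
    then show ?thesis using Fk_map[of E K "u - K" "v - K"] by simp
  next
    assume "\<exists>s t. s < K \<and> t < K \<and> A u s \<and> A v t \<and> E\<^sup>*\<^sup>* s t"
    then obtain s t where st: "A u s" "A v t" "E\<^sup>*\<^sup>* s t" by blast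
    have "E\<^sup>*\<^sup>* t v" using E_sym[OF sym AE[OF st(2)]] .
    then show ?thesis using AE[OF st(1)] st(3) by (metis rtranclp_trans)
  qed
next
  have AE: "E\<^sup>*\<^sup>* x s" if hA: "A x s" for x s
  proof (cases "x = s")
    case False
    then obtain w where w: "K \<le> x" "(Fk E K)\<^sup>*\<^sup>* (x - K) w" "E (w + K) s" using hA by (auto simp: A_def)
    have "E\<^sup>*\<^sup>* x (w + K)" using Fk_map[OF w(2)] w(1) by simp
    then show ?thesis using w(3) by (metis rtranclp.rtrancl_into_rtrancl)
  qed simp
  assume "E\<^sup>*\<^sup>* u v"
  then show "(K \<le> u \<and> K \<le> v \<and> (Fk E K)\<^sup>*\<^sup>* (u - K) (v - K))
           \<or> (\<exists>s t. s < K \<and> t < K \<and> A u s \<and> A v t \<and> E\<^sup>*\<^sup>* s t)"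
  proof (induction rule: rtranclp_induct)
    case base
    show ?case
    proof (cases "K \<le> u")
      case True then show ?thesis by simp
    next
      case False then show ?thesis by (auto simp: A_def)
    qed
  next
    case (step y x)
    from step.IH show ?case
    proof
      assume h: "K \<le> u \<and> K \<le> y \<and> (Fk E K)\<^sup>*\<^sup>* (u - K) (y - K)"
      show ?thesis
      proof (cases "K \<le> x")
        case True
        have "Fk E K (y - K) (x - K)" using step(2) h True by (simp add: Fk_def)
        then have "(Fk E K)\<^sup>*\<^sup>* (u - K) (x - K)" using h by (metis rtranclp.rtrancl_into_rtrancl)
        then show ?thesis using h True by blast
      next
        case False
        have "A u x" unfolding A_def using h step(2) by auto
        moreover have "A x x" by (simp add: A_def)
        moreover have "x < K" using False by simp
        ultimately show ?thesis by blast
      qed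
    next
      assume "\<exists>s t. s < K \<and> t < K \<and> A u s \<and> A y t \<and> E\<^sup>*\<^sup>* s t"
      then obtain s t where st: "s < K" "t < K" "A u s" "A y t" "E\<^sup>*\<^sup>* s t" by blast
      show ?thesis
      proof (cases "K \<le> x")
        case False
        have "E\<^sup>*\<^sup>* t y" using E_sym[OF sym AE[OF st(4)]] .
        then have "E\<^sup>*\<^sup>* s x" using st(5) step(2) by (metis rtranclp_trans rtranclp.rtrancl_into_rtrancl)
        moreover have "A x x" by (simp add: A_def)
        ultimately show ?thesis using st False by force
      next
        case True
        have "A x t"
        proof (cases "y = t")
          case True
          then have "E (x - K + K) t" using step(2) sym \<open>K \<le> x\<close> by simp
          then show ?thesis using \<open>K \<le> x\<close> unfolding A_def by blast
        next
          case False
          then obtain w where w: "K \<le> y" "(Fk E K)\<^sup>*\<^sup>* (y - K) w" "E (w + K) t"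
            using st(4) by (auto simp: A_def)
          have "Fk E K (x - K) (y - K)" using step(2) sym w(1) \<open>K \<le> x\<close> by (simp add: Fk_def)
          then have "(Fk E K)\<^sup>*\<^sup>* (x - K) w" using w(2) by (metis converse_rtranclp_into_rtranclp)
          then show ?thesis using w(3) \<open>K \<le> x\<close> unfolding A_def by blast
        qed
        then show ?thesis using st by blast
      qed
    qed
  qed
qed

lemma graph_main:
  assumes P: "periodic K p E" and sym: "\<And>u v. E u v = E v u"
  shows "\<exists>K' P'. periodic K' P' E\<^sup>*\<^sup>*"
proof -
  have p: "0 < p" using P by (simp add: periodic_def)
  interpret S: sg "Fk E K" p K
  proof
    show "0 < p" by (rule p)
    show "Fk E K u v = Fk E K v u" for u v using sym by (simp add: Fk_def)
    show "Fk E K (u + p) (v + p) = Fk E K u v" for u v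
    proof -
      have "E (u + K + p) (v + K + p) = E (u + K) (v + K)" using P unfolding periodic_def by simp
      then show ?thesis unfolding Fk_def by (simp add: ac_simps)
    qed
    show "Fk E K u (v + p) = Fk E K u v" if "u + K \<le> v" for u v
    proof -
      have "u + K + K \<le> v + K" using that by simp
      then have "E (u + K) (v + K + p) = E (u + K) (v + K)" using P unfolding periodic_def by blast
      then show ?thesis unfolding Fk_def by (simp add: ac_simps)
    qed
  qed
  define P' where "P' = S.cP * p"
  define K' where "K' = K + S.W0 + K + K + P' + S.W0 + 1"
  define A where "A \<equiv> (\<lambda>u s. u = s \<or> (K \<le> u \<and> (\<exists>w. (Fk E K)\<^sup>*\<^sup>* (u - K) w \<and> E (w + K) s)))"
  have D: "E\<^sup>*\<^sup>* u v \<longleftrightarrow> (K \<le> u \<and> K \<le> v \<and> (Fk E K)\<^sup>*\<^sup>* (u - K) (v - K))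
           \<or> (\<exists>s t. s < K \<and> t < K \<and> A u s \<and> A v t \<and> E\<^sup>*\<^sup>* s t)" for u v
    unfolding A_def by (rule decomp[OF sym])
  have Ashift: "A (u + P') s = A u s" if "K' \<le> u" "s < K" for u s
  proof -
    have Pr: "E (w + S.cP * p + K) s = E (w + K) s" if "K \<le> w" for w
    proof -
      have "s + K \<le> w + K" using that \<open>s < K\<close> by simp
      then have "E (w + K + S.cP * p) s = E (w + K) s" by (rule per_it3[OF P])
      then show ?thesis by (simp add: ac_simps)
    qed
    have u: "S.W0 + K + K + S.cP * p \<le> u - K" using that by (simp add: K'_def P'_def)
    have ex: "(\<exists>w. (Fk E K)\<^sup>*\<^sup>* (u - K + S.cP * p) w \<and> E (w + K) s) = (\<exists>w. (Fk E K)\<^sup>*\<^sup>* (u - K) w \<and> E (w + K) s)"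
      by (rule S.FA[where Pr="\<lambda>w. E (w + K) s", OF Pr u])
    have e: "u - K + S.cP * p = u + P' - K" using that by (simp add: K'_def P'_def)
    have n1: "u + P' \<noteq> s" "u \<noteq> s" "K \<le> u + P'" "K \<le> u" using that by (simp_all add: K'_def)
    show ?thesis unfolding A_def using ex n1 unfolding e by simp
  qed
  have G1: "E\<^sup>*\<^sup>* (u + P') (v + P') = E\<^sup>*\<^sup>* u v" if "K' \<le> u" "K' \<le> v" for u v
  proof -
    have "(Fk E K)\<^sup>*\<^sup>* (u - K + S.cP * p) (v - K + S.cP * p) = (Fk E K)\<^sup>*\<^sup>* (u - K) (v - K)"
      by (rule S.FG1) (use that in \<open>simp_all add: K'_def P'_def\<close>)
    moreover have "u - K + S.cP * p = u + P' - K" "v - K + S.cP * p = v + P' - K"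
      using that by (simp_all add: K'_def P'_def)
    ultimately have L: "(Fk E K)\<^sup>*\<^sup>* (u + P' - K) (v + P' - K) = (Fk E K)\<^sup>*\<^sup>* (u - K) (v - K)" by simp
    have k: "K \<le> u" "K \<le> v" "K \<le> u + P'" "K \<le> v + P'" using that by (simp_all add: K'_def)
    have R: "(\<exists>s t. s < K \<and> t < K \<and> A (u + P') s \<and> A (v + P') t \<and> E\<^sup>*\<^sup>* s t)
       = (\<exists>s t. s < K \<and> t < K \<and> A u s \<and> A v t \<and> E\<^sup>*\<^sup>* s t)"
      using Ashift[OF that(1)] Ashift[OF that(2)] by blast
    show ?thesis unfolding D[of "u + P'" "v + P'"] D[of u v] L R using k by simp
  qed
  have G2: "E\<^sup>*\<^sup>* u (v + P') = E\<^sup>*\<^sup>* u v" if "u + K' \<le> v" for u v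
  proof -
    have v: "K' \<le> v" using that by simp
    have L: "(K \<le> u \<and> K \<le> v + P' \<and> (Fk E K)\<^sup>*\<^sup>* (u - K) (v + P' - K))
      = (K \<le> u \<and> K \<le> v \<and> (Fk E K)\<^sup>*\<^sup>* (u - K) (v - K))"
    proof (cases "K \<le> u")
      case True
      have h1: "S.W0 + K + S.cP * p \<le> v - K" using v by (simp add: K'_def P'_def)
      have h2: "u - K + S.W0 + 1 \<le> v - K" using \<open>u + K' \<le> v\<close> True by (simp add: K'_def P'_def)
      have "(Fk E K)\<^sup>*\<^sup>* (u - K) (v - K + S.cP * p) = (Fk E K)\<^sup>*\<^sup>* (u - K) (v - K)"
        by (rule S.FG2[OF h1 h2])
      moreover have "v - K + S.cP * p = v + P' - K" using v by (simp_all add: K'_def P'_def)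
      ultimately show ?thesis using v by (simp add: K'_def)
    qed simp
    have R: "(\<exists>s t. s < K \<and> t < K \<and> A u s \<and> A (v + P') t \<and> E\<^sup>*\<^sup>* s t)
       = (\<exists>s t. s < K \<and> t < K \<and> A u s \<and> A v t \<and> E\<^sup>*\<^sup>* s t)"
      using Ashift[OF v] by blast
    show ?thesis unfolding D[of u "v + P'"] D[of u v] L R ..
  qed
  have "periodic K' P' E\<^sup>*\<^sup>*"
    unfolding periodic_def
  proof (intro conjI allI impI)
    show "0 < P'" using S.cP(1) p by (simp add: P'_def)
    show "E\<^sup>*\<^sup>* (m + P') (n + P') = E\<^sup>*\<^sup>* m n" if "K' \<le> m" "K' \<le> n" for m n using G1 that by blast
    show "E\<^sup>*\<^sup>* m (n + P') = E\<^sup>*\<^sup>* m n" if "m + K' \<le> n" for m n using G2 that by blast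
    show "E\<^sup>*\<^sup>* (m + P') n = E\<^sup>*\<^sup>* m n" if "n + K' \<le> m" for m n
    proof -
      have i1: "E\<^sup>*\<^sup>* (m + P') n = E\<^sup>*\<^sup>* n (m + P')" "E\<^sup>*\<^sup>* m n = E\<^sup>*\<^sup>* n m"
        using E_sym_iff[of E, OF sym] by blast+
      show ?thesis unfolding i1 by (rule G2[OF that])
    qed
  qed
  then show ?thesis by blast
qed


lemma per_sym: "periodic K p X \<Longrightarrow> periodic K p (\<lambda>m n. X m n \<or> X n m)"
  unfolding periodic_def
proof (elim conjE, intro conjI allI impI)
  assume h: "0 < p" "\<forall>m n. K \<le> m \<longrightarrow> K \<le> n \<longrightarrow> X (m + p) (n + p) = X m n"
    "\<forall>m n. m + K \<le> n \<longrightarrow> X m (n + p) = X m n" "\<forall>m n. n + K \<le> m \<longrightarrow> X (m + p) n = X m n"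
  show "0 < p" by (rule h(1))
  show "(X (m + p) (n + p) \<or> X (n + p) (m + p)) = (X m n \<or> X n m)" if "K \<le> m" "K \<le> n" for m n
    using h(2) that by simp
  show "(X m (n + p) \<or> X (n + p) m) = (X m n \<or> X n m)" if "m + K \<le> n" for m n
    using h(3,4) that by simp
  show "(X (m + p) n \<or> X n (m + p)) = (X m n \<or> X n m)" if "n + K \<le> m" for m n
    using h(3,4) that by simp
qed

theorem corollary4p7:
  fixes S :: "'s set" and rels :: "(nat \<times> 's list set) list"
    and \<phi> :: "unit list \<Rightarrow> 's" and R :: "'s list set"
  assumes "relational_structure S rels"
    and "FA_presentation UNIV \<phi> S rels" and "inj \<phi>"
    and "(2, R) \<in> set rels"
  defines "Rp \<equiv> {(x, y). [x, y] \<in> R}"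
  defines "Q \<equiv> Id_on S \<union> (Rp \<union> Rp\<inverse>)\<^sup>+"
  shows "regular_rel (Lambda UNIV \<phi> 2 {[x, y] | x y. (x, y) \<in> Q})
         \<and> unary_FA_presentable S (rels @ [(2, {[x, y] | x y. (x, y) \<in> Q})])"
proof -
  have FA: "(\<exists>A. finite A \<and> (UNIV :: unit list set) \<subseteq> lists A) \<and> regular (UNIV :: unit list set) \<and> \<phi> ` UNIV = S
     \<and> regular_rel (Lambda UNIV \<phi> 2 (eq_rel S)) \<and> (\<forall>(r, R) \<in> set rels. regular_rel (Lambda UNIV \<phi> r R))"
    using assms(2) by (simp add: FA_presentation_def)
  have regR: "regular_rel (Lambda UNIV \<phi> 2 R)" using FA assms(4) by auto
  define \<psi> where "\<psi> = (\<lambda>m. \<phi> (replicate m ()))"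
  define XR where "XR = (\<lambda>m n. [\<psi> m, \<psi> n] \<in> R)"
  have "regular {cw m n | m n. XR m n}"
    using regR unfolding regular_rel_def Lambda_conv XR_def \<psi>_def .
  then obtain K p where perR: "periodic K p XR" using reg_to_per by blast
  define E where "E = (\<lambda>m n. XR m n \<or> XR n m)"
  have perE: "periodic K p E" unfolding E_def by (rule per_sym[OF perR])
  have symE: "\<And>u v. E u v = E v u" unfolding E_def by blast
  obtain K' P' where per: "periodic K' P' E\<^sup>*\<^sup>*" using graph_main[OF perE symE] by blast
  have injpsi: "\<psi> m = \<psi> n \<Longrightarrow> m = n" for m n
  proof -
    assume "\<psi> m = \<psi> n"
    then have "replicate m () = replicate n ()" using assms(3) unfolding \<psi>_def inj_def by blast
    then show "m = n" by (metis length_replicate)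
  qed
  have psiS: "\<psi> m \<in> S" for m using FA unfolding \<psi>_def by blast
  have Spsi: "\<exists>k. x = \<psi> k" if xS: "x \<in> S" for x
  proof -
    obtain u where "x = \<phi> u" using xS FA by blast
    then have "x = \<psi> (length u)" unfolding \<psi>_def using unit_list[of u, symmetric] by simp
    then show ?thesis by blast
  qed
  have RS: "set xs \<subseteq> S" if "xs \<in> R" for xs
    using assms(1) assms(4) that unfolding relational_structure_def by fastforce
  define M where "M = Rp \<union> Rp\<inverse>"
  have Mchar: "(\<psi> a, \<psi> b) \<in> M \<longleftrightarrow> E a b" for a b
    by (auto simp: M_def Rp_def E_def XR_def)
  have MS: "x \<in> S \<and> y \<in> S" if "(x, y) \<in> M" for x y
    using that RS by (auto simp: M_def Rp_def) (metis insert_subset list.simps(15))+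
  have tr1: "(\<psi> m, \<psi> n) \<in> M\<^sup>+" if "E\<^sup>+\<^sup>+ m n" for m n
    using that
  proof (induction rule: tranclp_induct)
    case (base y) then show ?case using Mchar by blast
  next
    case (step y z)
    then have "(\<psi> y, \<psi> z) \<in> M" using Mchar by blast
    then show ?case using step.IH by (meson trancl_into_trancl)
  qed
  have tr2: "\<forall>n. y = \<psi> n \<longrightarrow> E\<^sup>+\<^sup>+ m n" if "(\<psi> m, y) \<in> M\<^sup>+" for m y
    using that
  proof (induction rule: trancl_induct)
    case (base y)
    then show ?case using Mchar by blast
  next
    case (step y z)
    obtain k where k: "y = \<psi> k" using MS[OF step(2)] Spsi by blast
    have "E\<^sup>+\<^sup>+ m k" using step.IH k by blast
    show ?case
    proof (intro allI impI)
      fix n assume zn: "z = \<psi> n"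
      have "E k n" using step(2) k zn Mchar by blast
      then show "E\<^sup>+\<^sup>+ m n" using \<open>E\<^sup>+\<^sup>+ m k\<close> by (meson tranclp.trancl_into_trancl)
    qed
  qed
  have key: "(\<psi> m, \<psi> n) \<in> Q \<longleftrightarrow> E\<^sup>*\<^sup>* m n" for m n
  proof -
    have "(\<psi> m, \<psi> n) \<in> Q \<longleftrightarrow> m = n \<or> E\<^sup>+\<^sup>+ m n"
      unfolding Q_def M_def[symmetric] using injpsi psiS tr1 tr2 by (auto simp: Id_on_def)
    also have "\<dots> \<longleftrightarrow> E\<^sup>*\<^sup>* m n" by (meson rtranclpD tranclp_into_rtranclp rtranclp.rtrancl_refl)
    finally show ?thesis .
  qed
  have seteq: "{cw m n | m n. [\<phi> (replicate m ()), \<phi> (replicate n ())] \<in> {[x, y] | x y. (x, y) \<in> Q}}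
     = {cw m n | m n. E\<^sup>*\<^sup>* m n}"
    using key unfolding \<psi>_def by auto
  have reg: "regular_rel (Lambda UNIV \<phi> 2 {[x, y] | x y. (x, y) \<in> Q})"
    unfolding regular_rel_def Lambda_conv seteq by (rule per_to_reg[OF per])
  have "FA_presentation UNIV \<phi> S (rels @ [(2, {[x, y] | x y. (x, y) \<in> Q})])"
    using FA reg unfolding FA_presentation_def by auto
  then have "unary_FA_presentable S (rels @ [(2, {[x, y] | x y. (x, y) \<in> Q})])"
    unfolding unary_FA_presentable_def by blast
  then show ?thesis using reg by blast
qed

end
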